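(* Let $n>2$ be an integer and let $A$ be a set of $k$ integers with $k\ge 2n+1$. Then $$|S_n(A)|> (k-1)n-3\binom n2+1.$$
   Context: For a finite set $A\subseteq\mathbb Z$ and a positive integer $n$, define $$S_n(A)=\{a_1+\cdots+a_n:\ a_1,\ldots,a_n\in A,\ \text{and}\ a_i^2\neq a_j^2\ \text{for}\ 1\le i<j\le n\}.$$ *)

theory Defs
  imports Main
begin

definition restricted_sumset :: "nat \<Rightarrow> int set \<Rightarrow> int set" where
  "restricted_sumset n A =
     {(\<Sum>i<n. a i) | a. (\<forall>i<n. a i \<in> A) \<and>
                        (\<forall>i<n. \<forall>j<n. i < j \<longrightarrow> (a i)^2 \<noteq> (a j)^2)}"

end

theory Submission
  imports Defs
begin

definition V :: "nat \<Rightarrow> int set \<Rightarrow> int set set" where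
  "V n A = {C. C \<subseteq> A \<and> finite C \<and> card C = n \<and> inj_on abs C}"

definition SS :: "nat \<Rightarrow> int set \<Rightarrow> int set" where
  "SS n A = (\<lambda>C. \<Sum>C) ` V n A"

lemma rs_eq: "restricted_sumset n A = SS n A"
proof
  show "restricted_sumset n A \<subseteq> SS n A"
  proof
    fix s assume "s \<in> restricted_sumset n A"
    then obtain a where s: "s = (\<Sum>i<n. a i)" and aA: "\<forall>i<n. a i \<in> A"
      and sq: "\<forall>i<n. \<forall>j<n. i < j \<longrightarrow> (a i)^2 \<noteq> (a j)^2"
      unfolding restricted_sumset_def by blast
    have sq': "(a i)^2 = (a j)^2 \<Longrightarrow> i < n \<Longrightarrow> j < n \<Longrightarrow> i = j" for i j
      using sq by (metis linorder_neqE_nat)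
    have inj: "inj_on a {..<n}"
      by (rule inj_onI) (use sq' in auto)
    have absq: "\<bar>u\<bar> = \<bar>v\<bar> \<longleftrightarrow> u^2 = v^2" for u v :: int
      by (metis abs_power2 power2_eq_iff_nonneg abs_ge_zero power2_abs)
    let ?C = "a ` {..<n}"
    have "?C \<in> V n A"
      unfolding V_def
    proof (intro CollectI conjI)
      show "?C \<subseteq> A" using aA by auto
      show "finite ?C" by auto
      show "card ?C = n" using card_image[OF inj] by simp
      show "inj_on abs ?C"
      proof (rule inj_onI)
        fix u v assume "u \<in> ?C" "v \<in> ?C" "\<bar>u\<bar> = \<bar>v\<bar>"
        then obtain i j where "i < n" "j < n" "u = a i" "v = a j" by auto
        then show "u = v" using sq' absq \<open>\<bar>u\<bar> = \<bar>v\<bar>\<close> by metis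
      qed
    qed
    moreover have "\<Sum>?C = s" using s sum.reindex[OF inj, of "\<lambda>x. x"] by simp
    ultimately show "s \<in> SS n A" unfolding SS_def by force
  qed
next
  show "SS n A \<subseteq> restricted_sumset n A"
  proof
    fix s assume "s \<in> SS n A"
    then obtain C where C: "C \<subseteq> A" "finite C" "card C = n" "inj_on abs C" and s: "s = \<Sum>C"
      unfolding SS_def V_def by auto
    obtain f where f: "bij_betw f {..<n} C"
      using C by (metis ex_bij_betw_nat_finite lessThan_atLeast0)
    have "s = (\<Sum>i<n. f i)"
      using s sum.reindex_bij_betw[OF f, of "\<lambda>x. x"] by simp
    moreover have "\<forall>i<n. f i \<in> A" using f C by (auto dest: bij_betw_apply)
    moreover have "\<forall>i<n. \<forall>j<n. i < j \<longrightarrow> (f i)^2 \<noteq> (f j)^2"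
    proof (intro allI impI)
      fix i j assume ij: "i < n" "j < n" "i < j"
      show "(f i)^2 \<noteq> (f j)^2"
      proof
        assume "(f i)^2 = (f j)^2"
        then have "\<bar>f i\<bar> = \<bar>f j\<bar>" by (metis abs_power2 power2_eq_iff_nonneg abs_ge_zero power2_abs)
        moreover have "f i \<in> C" "f j \<in> C" using bij_betw_apply[OF f] ij by auto
        ultimately have "f i = f j" using C(4) by (auto dest: inj_onD)
        then have "i = j" using f ij by (auto simp: bij_betw_def dest: inj_onD)
        then show False using ij by simp
      qed
    qed
    ultimately show "s \<in> restricted_sumset n A" unfolding restricted_sumset_def by blast
  qed
qed

lemma V_finite: "finite A \<Longrightarrow> finite (V n A)"
  unfolding V_def by (rule finite_subset[of _ "Pow A"]) auto

lemma SS_finite: "finite A \<Longrightarrow> finite (SS n A)"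
  unfolding SS_def using V_finite by auto

lemma V_mono: "A \<subseteq> B \<Longrightarrow> V n A \<subseteq> V n B"
  unfolding V_def by auto

lemma SS_mono: "A \<subseteq> B \<Longrightarrow> SS n A \<subseteq> SS n B"
  unfolding SS_def using V_mono by blast

lemma SS_memI: "C \<in> V n A \<Longrightarrow> \<Sum>C \<in> SS n A"
  unfolding SS_def by auto

lemma SS_neg: "SS n (uminus ` A) = uminus ` SS n A"
proof -
  have 1: "uminus ` C \<in> V n (uminus ` A)" if "C \<in> V n A" for C A
  proof -
    have "inj_on uminus C" by (auto intro: inj_onI)
    then show ?thesis using that unfolding V_def
      by (auto simp: card_image inj_on_def)
  qed
  have s: "\<Sum>(uminus ` C) = - \<Sum>C" for C :: "int set"
    by (subst sum.reindex) (auto intro: inj_onI simp: sum_negf)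
  show ?thesis
  proof
    show "SS n (uminus ` A) \<subseteq> uminus ` SS n A"
    proof
      fix t assume "t \<in> SS n (uminus ` A)"
      then obtain C where C: "C \<in> V n (uminus ` A)" "t = \<Sum>C" unfolding SS_def by auto
      have "uminus ` C \<in> V n (uminus ` uminus ` A)" by (rule 1[OF C(1)])
      then have "uminus ` C \<in> V n A" by (simp add: image_image)
      then have "\<Sum>(uminus ` C) \<in> SS n A" by (rule SS_memI)
      then show "t \<in> uminus ` SS n A" using C(2) s[of C] by (metis add.inverse_inverse image_eqI)
    qed
    show "uminus ` SS n A \<subseteq> SS n (uminus ` A)"
    proof
      fix t assume "t \<in> uminus ` SS n A"
      then obtain C where C: "C \<in> V n A" "t = - \<Sum>C" unfolding SS_def by auto
      have "\<Sum>(uminus ` C) \<in> SS n (uminus ` A)" by (rule SS_memI[OF 1[OF C(1)]])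
      then show "t \<in> SS n (uminus ` A)" using C(2) s[of C] by simp
    qed
  qed
qed

lemma card_SS_neg: "card (SS n (uminus ` A)) = card (SS n A)"
  by (simp add: SS_neg card_image inj_on_def)

lemma V_nonempty:
  assumes "finite A" "n \<le> card (abs ` A)"
  shows "V n A \<noteq> {}"
proof -
  obtain B where B: "B \<subseteq> abs ` A" "card B = n"
    using obtain_subset_with_card_n[OF assms(2)] by blast
  define f where "f v = (SOME a. a \<in> A \<and> \<bar>a\<bar> = v)" for v
  have f: "f v \<in> A \<and> \<bar>f v\<bar> = v" if "v \<in> B" for v
  proof -
    from that B obtain a where "a \<in> A" "\<bar>a\<bar> = v" by auto
    then show ?thesis unfolding f_def by (metis (mono_tags, lifting) someI)
  qed
  have inj: "inj_on f B" by (rule inj_onI) (metis f)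
  have fin: "finite B" using B assms(1) finite_subset by blast
  have "f ` B \<in> V n A"
    unfolding V_def
  proof (intro CollectI conjI)
    show "f ` B \<subseteq> A" using f by auto
    show "finite (f ` B)" using fin by auto
    show "card (f ` B) = n" using card_image[OF inj] B by simp
    show "inj_on abs (f ` B)" by (rule inj_onI) (metis f imageE)
  qed
  then show ?thesis by auto
qed

lemma V_card_abs: "C \<in> V n A \<Longrightarrow> card (abs ` C) = n"
  unfolding V_def by (auto simp: card_image)

definition Pos :: "int set \<Rightarrow> int set" where
  "Pos A = {v \<in> A. v > 0 \<and> -v \<in> A}"

lemma Pos_sub: "Pos A \<subseteq> abs ` A"
  unfolding Pos_def by (auto intro!: image_eqI)

lemma card_Pos:
  assumes "finite A"
  shows "card A = card (abs ` A) + card (Pos A)"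
proof -
  define P1 where "P1 = {a \<in> A. \<not> (a < 0 \<and> -a \<in> A)}"
  define P2 where "P2 = {a \<in> A. a < 0 \<and> -a \<in> A}"
  have A: "A = P1 \<union> P2" "P1 \<inter> P2 = {}" unfolding P1_def P2_def by auto
  have fin: "finite P1" "finite P2" using assms unfolding P1_def P2_def by auto
  have "P2 = uminus ` Pos A" unfolding P2_def Pos_def by force
  then have c2: "card P2 = card (Pos A)" by (simp add: card_image inj_on_def)
  have inj: "inj_on abs P1"
    unfolding P1_def by (rule inj_onI) (auto simp: abs_if split: if_splits)
  have im: "abs ` P1 = abs ` A"
  proof
    show "abs ` P1 \<subseteq> abs ` A" unfolding P1_def by auto
    show "abs ` A \<subseteq> abs ` P1"
    proof
      fix v assume "v \<in> abs ` A"
      then obtain a where a: "a \<in> A" "v = \<bar>a\<bar>" by auto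
      show "v \<in> abs ` P1"
      proof (cases "a < 0 \<and> -a \<in> A")
        case True
        then have "-a \<in> P1" unfolding P1_def by auto
        then show ?thesis using a True by (auto intro!: image_eqI[where x="-a"])
      next
        case False
        then have "a \<in> P1" unfolding P1_def using a by auto
        then show ?thesis using a by auto
      qed
    qed
  qed
  have "card A = card P1 + card P2" using A fin card_Un_disjoint by metis
  also have "card P1 = card (abs ` A)" using card_image[OF inj] im by simp
  finally show ?thesis using c2 by simp
qed

lemma card_le_2abs: "finite (A::int set) \<Longrightarrow> card A \<le> 2 * card (abs ` A)"
  using card_Pos[of A] card_mono[of "abs ` A" "Pos A"] Pos_sub[of A] by auto

lemma full_paired:
  assumes "finite A" "card A = 2 * card (abs ` A)"
  shows "Pos A = abs ` A"
  using card_Pos[OF assms(1)] assms(2) card_subset_eq[OF _ Pos_sub, of A] assms(1) by simp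

lemma GAIN:
  assumes fin: "finite A" and x: "x > 0" "x \<notin> A"
    and lt: "\<forall>a\<in>A. a \<noteq> -x \<longrightarrow> \<bar>a\<bar> < x"
    and b: "n \<le> card (abs ` A)" and b2: "-x \<in> A \<longrightarrow> n + 1 \<le> card (abs ` A)"
  shows "card (SS n (insert x A)) \<ge> card (SS n A) + n"
proof -
  have ne: "SS n A \<noteq> {}" using V_nonempty[OF fin b] unfolding SS_def by auto
  have finS: "finite (SS n A)" using SS_finite[OF fin] .
  define M where "M = Max (SS n A)"
  have Mge: "s \<le> M" if "s \<in> SS n A" for s using Max_ge[OF finS that] M_def by simp
  obtain T where T: "T \<in> V n A" "\<Sum>T = M"
    using Max_in[OF finS ne] unfolding M_def SS_def by auto
  have TV: "T \<subseteq> A" "finite T" "card T = n" "inj_on abs T" using T(1) unfolding V_def by auto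
  have nT: "-x \<notin> T"
  proof
    assume mx: "-x \<in> T"
    then have "-x \<in> A" using TV by auto
    then have "n + 1 \<le> card (abs ` A)" using b2 by simp
    moreover have "card (abs ` T) = n" using V_card_abs[OF T(1)] .
    ultimately have "abs ` T \<noteq> abs ` A" by auto
    moreover have "abs ` T \<subseteq> abs ` A" using TV by auto
    ultimately obtain z where z: "z \<in> A" "\<bar>z\<bar> \<notin> abs ` T" by auto
    have zx: "\<bar>z\<bar> \<noteq> x" using z(2) mx x(1) by (metis abs_minus_cancel abs_of_pos image_eqI)
    then have "z \<noteq> -x" using x(1) by auto
    then have zl: "\<bar>z\<bar> < x" using lt z(1) by auto
    have zT: "z \<notin> T" using z(2) by auto
    define T' where "T' = insert z (T - {-x})"
    have "T' \<in> V n A"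
      unfolding V_def T'_def
    proof (intro CollectI conjI)
      show "insert z (T - {- x}) \<subseteq> A" using z TV by auto
      show "finite (insert z (T - {- x}))" using TV by auto
      have "card T > 0" using TV mx card_gt_0_iff by blast
      moreover have "card (T - {-x}) = n - 1" using TV mx by (simp add: card_Diff_singleton)
      ultimately show "card (insert z (T - {- x})) = n" using TV zT by simp
      have "inj_on abs (T - {-x})" using TV(4) by (rule inj_on_subset) auto
      moreover have "\<bar>z\<bar> \<notin> abs ` (T - {-x} - {z})" using z(2) by blast
      ultimately show "inj_on abs (insert z (T - {- x}))"
        by (subst inj_on_insert) blast
    qed
    then have "\<Sum>T' \<le> M" using Mge SS_memI by blast
    moreover have "\<Sum>T' = z + (\<Sum>T - (-x))"
      unfolding T'_def using TV zT mx by (simp add: sum_diff1)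
    ultimately show False using T(2) zl by linarith
  qed
  define N where "N = (\<lambda>t. \<Sum>T - t + x) ` T"
  have NS: "N \<subseteq> SS n (insert x A)"
  proof
    fix s assume "s \<in> N"
    then obtain t where t: "t \<in> T" "s = \<Sum>T - t + x" unfolding N_def by auto
    have xT: "x \<notin> T" using TV x by auto
    define C where "C = insert x (T - {t})"
    have "C \<in> V n (insert x A)"
      unfolding V_def C_def
    proof (intro CollectI conjI)
      show "insert x (T - {t}) \<subseteq> insert x A" using TV by auto
      show "finite (insert x (T - {t}))" using TV by auto
      have "card T > 0" using TV t card_gt_0_iff by blast
      moreover have "card (T - {t}) = n - 1" using TV t by (simp add: card_Diff_singleton)
      ultimately show "card (insert x (T - {t})) = n" using TV xT by simp
      have "\<bar>a\<bar> \<noteq> \<bar>x\<bar>" if "a \<in> T" for a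
      proof -
        have "a \<noteq> -x" using nT that by auto
        then show ?thesis using lt TV that x by auto
      qed
      then have "\<bar>x\<bar> \<notin> abs ` (T - {t} - {x})" by fastforce
      moreover have "inj_on abs (T - {t})" using TV(4) by (rule inj_on_subset) auto
      ultimately show "inj_on abs (insert x (T - {t}))"
        by (subst inj_on_insert) blast
    qed
    moreover have "\<Sum>C = s" unfolding C_def using TV xT t by (simp add: sum_diff1)
    ultimately show "s \<in> SS n (insert x A)" using SS_memI by metis
  qed
  have Ngt: "s > M" if "s \<in> N" for s
  proof -
    from that obtain t where t: "t \<in> T" "s = \<Sum>T - t + x" unfolding N_def by auto
    have "t \<noteq> -x" using nT t by auto
    then have "\<bar>t\<bar> < x" using lt TV t by auto
    then show ?thesis using t T(2) by auto
  qed
  have disj: "SS n A \<inter> N = {}" using Mge Ngt by (meson disjoint_iff not_le)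
  have cN: "card N = n"
    unfolding N_def using TV by (subst card_image) (auto simp: inj_on_def)
  have sub: "SS n A \<union> N \<subseteq> SS n (insert x A)" using NS SS_mono[of A "insert x A" n] by auto
  have finN: "finite N" unfolding N_def using TV by auto
  have "card (SS n A \<union> N) = card (SS n A) + n"
    using card_Un_disjoint[OF finS finN disj] cN by simp
  moreover have "card (SS n A \<union> N) \<le> card (SS n (insert x A))"
    by (rule card_mono[OF SS_finite sub]) (use fin in auto)
  ultimately show ?thesis by simp
qed

lemma V_insert:
  assumes "R \<in> V m A" "z \<in> B" "A \<subseteq> B" "\<bar>z\<bar> \<notin> abs ` R"
  shows "insert z R \<in> V (Suc m) B"
proof -
  have R: "R \<subseteq> A" "finite R" "card R = m" "inj_on abs R" using assms(1) unfolding V_def by auto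
  have zR: "z \<notin> R" using assms(4) by auto
  show ?thesis unfolding V_def
  proof (intro CollectI conjI)
    show "insert z R \<subseteq> B" using R assms by auto
    show "finite (insert z R)" using R by auto
    show "card (insert z R) = Suc m" using R zR by simp
    have "\<bar>z\<bar> \<notin> abs ` (R - {z})" using assms(4) by blast
    then show "inj_on abs (insert z R)" using R(4) by (subst inj_on_insert) blast
  qed
qed

lemma OPTB:
  assumes fin: "finite A" and x: "x > 0" and lt: "\<forall>a\<in>A. \<bar>a\<bar> < x"
    and b: "card (abs ` A) = n" and n1: "n \<ge> 1"
  shows "card (SS n (insert x A)) \<ge> card (SS (n-1) A) + 1"
    and "Pos A = abs ` A \<Longrightarrow> card (SS n (insert x A)) \<ge> card (SS (n-1) A) + 2"
proof -
  have xA: "x \<notin> A" using lt x by auto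
  define Y where "Y = (\<lambda>s. x + s) ` SS (n-1) A"
  have nn: "Suc (n - 1) = n" using n1 by simp
  have YS: "Y \<subseteq> SS n (insert x A)"
  proof
    fix y assume "y \<in> Y"
    then obtain R where R: "R \<in> V (n-1) A" "y = x + \<Sum>R" unfolding Y_def SS_def by auto
    have R': "R \<subseteq> A" "finite R" using R(1) unfolding V_def by auto
    have "\<bar>x\<bar> \<notin> abs ` R" using R' lt x by force
    then have "insert x R \<in> V n (insert x A)" using V_insert[OF R(1), of x "insert x A"] nn by auto
    moreover have "x \<notin> R" using R' xA by auto
    then have "\<Sum>(insert x R) = y" using R R' by simp
    ultimately show "y \<in> SS n (insert x A)" using SS_memI by metis
  qed
  have cY: "card Y = card (SS (n-1) A)" unfolding Y_def by (simp add: card_image inj_on_def)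
  have finT: "finite (SS n (insert x A))" using SS_finite fin by auto
  have key: "card (SS n (insert x A)) \<ge> card (SS (n-1) A) + card L"
    if L: "L \<subseteq> SS n (insert x A)" "\<forall>l\<in>L. \<forall>y\<in>Y. l < y" for L
  proof -
    have fL: "finite L" using L(1) finT finite_subset by blast
    have fY: "finite Y" using YS finT finite_subset by blast
    have "Y \<inter> L = {}" using L(2) by fastforce
    then have "card (Y \<union> L) = card Y + card L" using card_Un_disjoint fL fY by blast
    moreover have "card (Y \<union> L) \<le> card (SS n (insert x A))" using card_mono[OF finT] YS L(1) by simp
    ultimately show ?thesis using cY by simp
  qed
  have Yform: "\<And>y. y \<in> Y \<Longrightarrow> \<exists>R \<in> V (n-1) A. y = x + \<Sum>R" unfolding Y_def SS_def by auto
  have missing: "\<exists>w \<in> abs ` A. w \<notin> abs ` R" if "R \<in> V (n-1) A" for R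
  proof -
    have "card (abs ` R) = n - 1" using V_card_abs[OF that] .
    moreover have "abs ` R \<subseteq> abs ` A" using that unfolding V_def by auto
    moreover
    { assume "\<not> ?thesis"
      then have "abs ` A \<subseteq> abs ` R" by blast
      then have "abs ` A = abs ` R" using \<open>abs ` R \<subseteq> abs ` A\<close> by blast }
    ultimately show ?thesis using b n1 by force
  qed
  show "card (SS n (insert x A)) \<ge> card (SS (n-1) A) + 1"
  proof -
    have ne: "SS n A \<noteq> {}" using V_nonempty[OF fin, of n] b unfolding SS_def by auto
    define m where "m = Min (SS n A)"
    have mS: "m \<in> SS n (insert x A)" using Min_in[OF SS_finite[OF fin] ne] SS_mono[of A "insert x A" n] m_def by auto
    have "m < y" if yY: "y \<in> Y" for y
    proof -
      obtain R where R: "R \<in> V (n-1) A" "y = x + \<Sum>R" using Yform[OF yY] by blast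
      obtain w where w: "w \<in> abs ` A" "w \<notin> abs ` R" using missing[OF R(1)] by blast
      then obtain z where z: "z \<in> A" "w = \<bar>z\<bar>" by auto
      have "insert z R \<in> V n A" using V_insert[OF R(1) z(1)] w z nn by auto
      then have "\<Sum>(insert z R) \<in> SS n A" by (rule SS_memI)
      then have "m \<le> \<Sum>(insert z R)" unfolding m_def using Min_le[OF SS_finite[OF fin]] by blast
      moreover have "z \<notin> R" using w z by auto
      then have "\<Sum>(insert z R) = z + \<Sum>R" using R(1) unfolding V_def by simp
      moreover have "z < x" using lt z by auto
      ultimately show ?thesis using R(2) by linarith
    qed
    then show ?thesis using key[of "{m}"] mS by auto
  qed
  assume P: "Pos A = abs ` A"
  define B where "B = abs ` A"
  have Bp: "v > 0" "v \<in> A" "-v \<in> A" if "v \<in> B" for v using P that unfolding B_def Pos_def by auto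
  have finB: "finite B" unfolding B_def using fin by auto
  have Bne: "B \<noteq> {}" using b n1 unfolding B_def by auto
  define u where "u = Min B"
  have uB: "u \<in> B" unfolding u_def using Min_in[OF finB Bne] .
  have ule: "u \<le> v" if "v \<in> B" for v unfolding u_def using Min_le[OF finB that] .
  define Cn where "Cn = uminus ` B"
  have injn: "inj_on uminus B" by (auto simp: inj_on_def)
  have sCn: "\<Sum>Cn = - \<Sum>B" unfolding Cn_def by (simp add: sum.reindex[OF injn] sum_negf)
  have absCn: "abs ` Cn = B" unfolding Cn_def using Bp by (force simp: image_image)
  have CnV: "Cn \<in> V n A" unfolding V_def
  proof (intro CollectI conjI)
    show "Cn \<subseteq> A" unfolding Cn_def using Bp by auto
    show "finite Cn" unfolding Cn_def using finB by auto
    show "card Cn = n" unfolding Cn_def using b B_def card_image[OF injn] by simp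
    show "inj_on abs Cn" unfolding Cn_def using Bp by (auto simp: inj_on_def) (metis abs_of_pos)
  qed
  define C2 where "C2 = insert u (Cn - {-u})"
  have muCn: "-u \<in> Cn" unfolding Cn_def using uB by auto
  have uCn: "u \<notin> Cn"
  proof
    assume "u \<in> Cn"
    then obtain v where "v \<in> B" "u = -v" unfolding Cn_def by auto
    moreover have "0 < v" "0 < u" using Bp uB \<open>v \<in> B\<close> by auto
    ultimately show False by simp
  qed
  have C2V: "C2 \<in> V n A"
  proof -
    have Cn': "Cn \<subseteq> A" "finite Cn" "card Cn = n" "inj_on abs Cn" using CnV unfolding V_def by auto
    have "Cn - {-u} \<in> V (n-1) A" unfolding V_def using Cn' muCn
      by (auto simp: card_Diff_singleton intro: inj_on_subset)
    moreover have "\<bar>u\<bar> \<notin> abs ` (Cn - {-u})"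
    proof
      assume "\<bar>u\<bar> \<in> abs ` (Cn - {-u})"
      then obtain c where c0: "c \<in> Cn - {-u}" "\<bar>u\<bar> = \<bar>c\<bar>" by blast
      then have c: "c \<in> Cn" "c \<noteq> -u" "\<bar>c\<bar> = \<bar>u\<bar>" by auto
      then have "\<bar>c\<bar> = \<bar>-u\<bar>" by simp
      then have "c = -u" using inj_onD[OF Cn'(4)] c(1) muCn by blast
      then show False using c(2) by simp
    qed
    ultimately show ?thesis unfolding C2_def using V_insert[of "Cn - {-u}" "n-1" A u A] Bp uB nn by auto
  qed
  have sC2: "\<Sum>C2 = - \<Sum>B + 2 * u"
  proof -
    have "finite Cn" unfolding Cn_def using finB by auto
    then have "\<Sum>C2 = u + (\<Sum>Cn - (-u))" unfolding C2_def using muCn uCn by (simp add: sum_diff1)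
    then show ?thesis using sCn by simp
  qed
  have m1: "- \<Sum>B \<in> SS n (insert x A)" using SS_memI[OF CnV] sCn SS_mono[of A "insert x A" n] by auto
  have m2: "- \<Sum>B + 2*u \<in> SS n (insert x A)" using SS_memI[OF C2V] sC2 SS_mono[of A "insert x A" n] by auto
  have low: "- \<Sum>B + 2*u < y" if yY: "y \<in> Y" for y
  proof -
    obtain R where R: "R \<in> V (n-1) A" "y = x + \<Sum>R" using Yform[OF yY] by blast
    have R': "R \<subseteq> A" "finite R" "inj_on abs R" using R(1) unfolding V_def by auto
    obtain w where w: "w \<in> B" "w \<notin> abs ` R" using missing[OF R(1)] unfolding B_def by blast
    have "\<Sum>R \<ge> (\<Sum>r\<in>R. - \<bar>r\<bar>)" by (rule sum_mono) simp
    also have "(\<Sum>r\<in>R. - \<bar>r\<bar>) = - \<Sum>(abs ` R)" using R'(3) by (simp add: sum.reindex sum_negf)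
    finally have s1: "\<Sum>R \<ge> - \<Sum>(abs ` R)" .
    have "abs ` R \<subseteq> B - {w}" using R' w unfolding B_def by blast
    then have "\<Sum>(abs ` R) \<le> \<Sum>(B - {w})" using finB Bp by (intro sum_mono2) (auto simp: less_imp_le)
    also have "\<Sum>(B - {w}) = \<Sum>B - w" using finB w by (simp add: sum_diff1)
    finally have s2: "\<Sum>(abs ` R) \<le> \<Sum>B - w" .
    have "u \<le> w" using ule w by auto
    moreover have "u < x" using lt uB Bp unfolding B_def by auto
    ultimately show ?thesis using s1 s2 R(2) by linarith
  qed
  have "0 < u" using Bp uB by auto
  then have "- \<Sum>B \<noteq> - \<Sum>B + 2*u" by simp
  then have "card {- \<Sum>B, - \<Sum>B + 2*u} = 2" by simp
  moreover have "\<forall>l\<in>{- \<Sum>B, - \<Sum>B + 2*u}. \<forall>y\<in>Y. l < y" using low Bp uB by fastforce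
  ultimately show "card (SS n (insert x A)) \<ge> card (SS (n-1) A) + 2"
    using key[of "{- \<Sum>B, - \<Sum>B + 2*u}"] m1 m2 by auto
qed

lemma mem3:
  assumes "p \<in> A" "q \<in> A" "r \<in> A" "\<bar>p\<bar> \<noteq> \<bar>q\<bar>" "\<bar>p\<bar> \<noteq> \<bar>r\<bar>" "\<bar>q\<bar> \<noteq> \<bar>r\<bar>"
  shows "p + q + r \<in> SS 3 A"
proof -
  have d: "p \<noteq> q" "p \<noteq> r" "q \<noteq> r" using assms(4-6) by auto
  have i: "inj_on abs {p,q,r}" using assms(4-6) d by (simp add: inj_on_insert)
  have c: "card {p,q,r} = 3" using d by simp
  have "{p,q,r} \<in> V 3 A" unfolding V_def using assms(1-3) i c by simp
  moreover have "\<Sum>{p,q,r} = p + q + r" using d by simp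
  ultimately show ?thesis by (metis SS_memI)
qed

lemma card_chain:
  fixes L :: "int list"
  assumes "set L \<subseteq> S" "finite S" "sorted_wrt (<) L" "e \<in> S" "e \<notin> set L"
  shows "card S \<ge> Suc (length L)"
proof -
  have d: "distinct L" using assms(3) by (simp add: strict_sorted_iff)
  have "card (insert e (set L)) = Suc (card (set L))" using assms(5) by (simp add: card_insert_disjoint)
  also have "card (set L) = length L" using d by (rule distinct_card)
  finally have 1: "card (insert e (set L)) = Suc (length L)" .
  have "insert e (set L) \<subseteq> S" using assms(1,4) by blast
  from card_mono[OF assms(2) this] 1 show ?thesis by simp
qed

lemma SPEC6:
  fixes a b c x :: int
  assumes "0 < a" "a < b" "b < c" "c < x"
  shows "card (SS 3 {x,a,-a,b,-b,c,-c}) \<ge> 11"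
proof -
  let ?A = "{x,a,-a,b,-b,c,-c}"
  define L where "L = [(-a)+(-b)+(-c), a+(-b)+(-c), (-a)+b+(-c), (-a)+(-b)+c, a+(-b)+c, (-a)+b+c, a+b+c,
     x+a+b, x+a+c, x+b+c]"
  have sub: "set L \<subseteq> SS 3 ?A" unfolding L_def using assms
    by (simp only: set_simps insert_subset empty_subsetI) (intro conjI mem3; simp)
  have sw: "sorted_wrt (<) L" unfolding L_def using assms by simp
  have E: "{a+b+(-c), x+c+(-a), x+c+(-b), x+b+(-a)} \<subseteq> SS 3 ?A" using assms
    by (simp only: insert_subset empty_subsetI) (intro conjI mem3; simp)
  have "\<not> (\<forall>e\<in>{a+b+(-c), x+c+(-a), x+c+(-b), x+b+(-a)}. e \<in> set L)"
    unfolding L_def using assms by (simp; smt)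
  then obtain e where "e \<in> SS 3 ?A" "e \<notin> set L" using E by blast
  then have "card (SS 3 ?A) \<ge> Suc (length L)"
    using card_chain[OF sub _ sw] SS_finite[of ?A 3] by auto
  then show ?thesis unfolding L_def by simp
qed

lemma card_chain':
  fixes L :: "int list"
  assumes "set L \<subseteq> S" "finite S" "distinct L" "e \<in> S" "e \<notin> set L"
  shows "card S \<ge> Suc (length L)"
proof -
  have "card (insert e (set L)) = Suc (card (set L))" using assms(5) by (simp add: card_insert_disjoint)
  also have "card (set L) = length L" using assms(3) by (rule distinct_card)
  finally have 1: "card (insert e (set L)) = Suc (length L)" .
  have "insert e (set L) \<subseteq> S" using assms(1,4) by blast
  from card_mono[OF assms(2) this] 1 show ?thesis by simp
qed

lemma SPEC5:
  fixes a b s x :: int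
  assumes "0 < a" "a < b" "b < x" "\<bar>s\<bar> < x" "\<bar>s\<bar> \<noteq> a" "\<bar>s\<bar> \<noteq> b"
  shows "card (SS 3 {x,a,-a,b,-b,s}) \<ge> 8"
proof -
  let ?A = "{x,a,-a,b,-b,s}"
  have sa: "s \<noteq> a" "s \<noteq> -a" "s \<noteq> b" "s \<noteq> -b" "s < x" "-x < s" using assms by auto
  define L where "L = [s+(-a)+(-b), s+a+(-b), s+(-a)+b, s+a+b, x+a+b, x+s+b, x+s+a]"
  have sub: "set L \<subseteq> SS 3 ?A" unfolding L_def using assms sa
    by (simp only: set_simps insert_subset empty_subsetI) (intro conjI mem3; simp; linarith)
  have sw: "distinct L" unfolding L_def using assms sa by simp
  have E: "{x+(-a)+(-b), x+a+(-b), x+(-a)+b, x+s+(-a), x+s+(-b)} \<subseteq> SS 3 ?A" using assms sa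
    by (simp only: insert_subset empty_subsetI) (intro conjI mem3; simp; linarith)
  have "\<not> (\<forall>e\<in>{x+(-a)+(-b), x+a+(-b), x+(-a)+b, x+s+(-a), x+s+(-b)}. e \<in> set L)"
    unfolding L_def using assms sa by (simp; smt)
  then obtain e where "e \<in> SS 3 ?A" "e \<notin> set L" using E by blast
  then have "card (SS 3 ?A) \<ge> Suc (length L)"
    using card_chain'[OF sub _ sw] SS_finite[of ?A 3] by auto
  then show ?thesis unfolding L_def by simp
qed

lemma sort3:
  fixes p q r :: int
  assumes "p \<noteq> q" "q \<noteq> r" "p \<noteq> r"
  obtains a b c where "a < b" "b < c" "{p,q,r} = {a,b,c}"
proof -
  have "(p<q \<and> q<r) \<or> (p<r \<and> r<q) \<or> (q<p \<and> p<r) \<or> (q<r \<and> r<p) \<or> (r<p \<and> p<q) \<or> (r<q \<and> q<p)"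
    using assms by arith
  then show ?thesis
  proof (elim disjE conjE)
    assume "p<q" "q<r" then show ?thesis using that[of p q r] by blast
  next
    assume "p<r" "r<q" then show ?thesis using that[of p r q] by (metis insert_commute)
  next
    assume "q<p" "p<r" then show ?thesis using that[of q p r] by (metis insert_commute)
  next
    assume "q<r" "r<p" then show ?thesis using that[of q r p] by (metis insert_commute)
  next
    assume "r<p" "p<q" then show ?thesis using that[of r p q] by (metis insert_commute)
  next
    assume "r<q" "q<p" then show ?thesis using that[of r q p] by (metis insert_commute)
  qed
qed

lemma FLIP:
  assumes fin: "finite A" and b: "card (abs ` A) = n" and c: "card A > n"
  shows "card (SS n A) \<ge> 2"
proof -
  have "card (Pos A) > 0" using card_Pos[OF fin] b c by simp
  then obtain v where v: "v \<in> Pos A" by (metis card_gt_0_iff ex_in_conv)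
  then have vp: "v > 0" "v \<in> A" "-v \<in> A" unfolding Pos_def by auto
  obtain T where T: "T \<in> V n A" using V_nonempty[OF fin, of n] b by auto
  have TV: "T \<subseteq> A" "finite T" "card T = n" "inj_on abs T" using T unfolding V_def by auto
  have "abs ` T = abs ` A"
    using V_card_abs[OF T] b TV(1) by (metis card_subset_eq finite_imageI fin image_mono)
  then have "v \<in> abs ` T" using vp by (metis abs_of_pos imageI)
  then obtain t where t: "t \<in> T" "\<bar>t\<bar> = v" by auto
  have mt: "-t \<in> A" using t vp by (cases "t \<ge> 0") auto
  have t0: "t \<noteq> 0" using t vp by auto
  have n1: "n \<ge> 1" using t TV by (metis One_nat_def Suc_leI card_gt_0_iff empty_iff)
  have R: "T - {t} \<in> V (n-1) A" unfolding V_def using TV t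
    by (auto simp: card_Diff_singleton intro: inj_on_subset)
  have "\<bar>-t\<bar> \<notin> abs ` (T - {t})"
  proof
    assume "\<bar>-t\<bar> \<in> abs ` (T - {t})"
    then obtain y where y: "y \<in> T - {t}" "\<bar>t\<bar> = \<bar>y\<bar>" by auto
    then have "y = t" using inj_onD[OF TV(4)] t(1) by (metis DiffD1)
    then show False using y by simp
  qed
  then have T2: "insert (-t) (T - {t}) \<in> V n A" using V_insert[OF R mt] n1 by auto
  have mtT: "-t \<notin> T - {t}"
  proof
    assume "-t \<in> T - {t}"
    then have "\<bar>-t\<bar> \<in> abs ` (T - {t})" by (rule imageI)
    then show False using \<open>\<bar>-t\<bar> \<notin> abs ` (T - {t})\<close> by simp
  qed
  have "\<Sum>(insert (-t) (T - {t})) = -t + (\<Sum>T - t)" using mtT TV t by (simp add: sum_diff1)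
  then have ne: "\<Sum>(insert (-t) (T - {t})) \<noteq> \<Sum>T" using t0 by simp
  have "{\<Sum>T, \<Sum>(insert (-t) (T - {t}))} \<subseteq> SS n A" using SS_memI T T2 by auto
  moreover have "card {\<Sum>T, \<Sum>(insert (-t) (T - {t}))} = 2" using ne by auto
  ultimately show ?thesis using card_mono[OF SS_finite[OF fin]] by metis
qed

lemma N3BASE:
  assumes fin: "finite A" and b: "card (abs ` A) = 3" and x: "x > 0" and lt: "\<forall>a\<in>A. \<bar>a\<bar> < x"
  shows "3 * int (card A) - 7 \<le> int (card (SS 3 (insert x A)))"
proof -
  have k1: "3 \<le> card A" using b card_image_le[OF fin, of abs] by simp
  have k2: "card A \<le> 6" using b card_le_2abs[OF fin] by simp
  have xA: "x \<notin> A" using lt by auto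
  have mxA: "-x \<notin> A" using lt by fastforce
  have cP: "card A = 3 + card (Pos A)" using card_Pos[OF fin] b by simp
  have Pp: "v > 0" "v \<in> A" "-v \<in> A" if "v \<in> Pos A" for v using that unfolding Pos_def by auto
  have finP: "finite (Pos A)" using fin unfolding Pos_def by auto
  consider "card A \<le> 4" | "card A = 5" | "card A = 6" using k1 k2 by linarith
  then show ?thesis
  proof cases
    case 1
    have G: "card (SS 3 (insert x A)) \<ge> card (SS 3 A) + 3"
      by (rule GAIN[OF fin x xA]) (use lt mxA b in auto)
    show ?thesis
    proof (cases "card A = 4")
      case True
      then have "card (SS 3 A) \<ge> 2" using FLIP[OF fin b] by simp
      then show ?thesis using G True by linarith
    next
      case False
      then have "card A = 3" using 1 k1 by simp
      then show ?thesis using G by linarith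
    qed
  next
    case 2
    then have "card (Pos A) = 2" using cP by simp
    then obtain p q where pq: "Pos A = {p,q}" "p \<noteq> q" by (auto simp: card_2_iff)
    obtain a b where ab: "a < b" "{a,b} = Pos A"
    proof (cases "p < q")
      case True then show ?thesis using that[of p q] pq by auto
    next
      case False then show ?thesis using that[of q p] pq by (auto simp: insert_commute)
    qed
    have aP: "a \<in> Pos A" "b \<in> Pos A" using ab by auto
    note pa = Pp[OF aP(1)] and pb = Pp[OF aP(2)]
    define F where "F = {a,-a,b,-b}"
    have cF: "card F = 4" unfolding F_def using pa pb ab by auto
    have FA: "F \<subseteq> A" unfolding F_def using pa pb by auto
    have "card (A - F) = 1" using card_Diff_subset[OF _ FA] cF 2 unfolding F_def by simp
    then obtain s where s: "A - F = {s}" by (auto simp: card_1_singleton_iff)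
    have AF: "A = insert s F" using s FA by blast
    have sF: "s \<notin> F" using s by auto
    have sa: "\<bar>s\<bar> \<noteq> a" "\<bar>s\<bar> \<noteq> b" using sF pa pb unfolding F_def by (auto simp: abs_if split: if_splits)
    have "s \<in> A" using AF by auto
    then have "\<bar>s\<bar> < x" "\<bar>b\<bar> < x" using lt pb by auto
    then have S: "card (SS 3 {x,a,-a,b,-b,s}) \<ge> 8" using SPEC5[OF pa(1) ab(1) _ _ sa] pb by auto
    have "insert x A = {x,a,-a,b,-b,s}" unfolding AF F_def by auto
    then show ?thesis using S 2 by simp
  next
    case 3
    then have "card A = 2 * card (abs ` A)" using b by simp
    then have PA: "Pos A = abs ` A" by (rule full_paired[OF fin])
    then have "card (Pos A) = 3" using b by simp
    then obtain p q r where pqr: "Pos A = {p,q,r}" "p \<noteq> q" "q \<noteq> r" "p \<noteq> r" by (auto simp: card_3_iff)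
    obtain a b c where abc: "a < b" "b < c" "{p,q,r} = {a,b,c}" using sort3[OF pqr(2-4)] by blast
    have P: "Pos A = {a,b,c}" using abc pqr by simp
    have aP: "a \<in> Pos A" "b \<in> Pos A" "c \<in> Pos A" using P by auto
    note pa = Pp[OF aP(1)] and pb = Pp[OF aP(2)] and pc = Pp[OF aP(3)]
    have AE: "A = {a,-a,b,-b,c,-c}"
    proof
      show "{a,-a,b,-b,c,-c} \<subseteq> A" using pa pb pc by auto
      show "A \<subseteq> {a,-a,b,-b,c,-c}"
      proof
        fix y assume "y \<in> A"
        then have "\<bar>y\<bar> \<in> {a,b,c}" using PA P by auto
        then show "y \<in> {a,-a,b,-b,c,-c}" by (auto simp: abs_if split: if_splits)
      qed
    qed
    moreover have "c < x" using lt pc by auto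
    then have "card (SS 3 {x,a,-a,b,-b,c,-c}) \<ge> 11" using SPEC6[OF pa(1) abc(1,2)] by simp
    moreover have "insert x A = {x,a,-a,b,-b,c,-c}" using AE by auto
    ultimately have "card (SS 3 (insert x A)) \<ge> 11" by simp
    then show ?thesis using 3 by simp
  qed
qed

definition CL :: "nat \<Rightarrow> int set \<Rightarrow> bool" where
  "CL n A \<longleftrightarrow> (finite A \<longrightarrow> n + 1 \<le> card (abs ` A) \<longrightarrow>
     2 * int n * (int (card A) - int n) + 4 - int n * (int n - 1) \<le> 2 * int (card (SS n A)))"

lemma abs_neg_img: "abs ` (uminus ` A) = abs ` (A::int set)"
  by (auto simp: image_image)

lemma STEP:
  assumes n3: "n \<ge> 3" and fin: "finite A" and bA: "n + 1 \<le> card (abs ` A)"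
    and xA: "x \<in> A" and xM: "x = Max (abs ` A)"
    and IH: "\<And>A'. card A' < card A \<Longrightarrow> CL n A'"
    and IHn: "n \<ge> 4 \<Longrightarrow> \<forall>A. CL (n-1) A"
  shows "2 * int n * (int (card A) - int n) + 4 - int n * (int n - 1) \<le> 2 * int (card (SS n A))"
proof -
  have finB: "finite (abs ` A)" using fin by auto
  have le: "\<bar>a\<bar> \<le> x" if "a \<in> A" for a using Max_ge[OF finB] that xM by auto
  have x0: "x > 0"
  proof (rule ccontr)
    assume "\<not> x > 0"
    then have "abs ` A \<subseteq> {0}" using le by force
    then have "card (abs ` A) \<le> card {0::int}" by (intro card_mono) auto
    then have "card (abs ` A) \<le> 1" by simp
    then show False using bA n3 by simp
  qed
  define A1 where "A1 = A - {x}"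
  have finA1: "finite A1" using fin A1_def by auto
  have kpos: "card A \<ge> 1" using xA fin by (metis One_nat_def Suc_leI card_gt_0_iff empty_iff)
  have kA1a: "card A1 = card A - 1" using xA fin A1_def by (simp add: card_Diff_singleton)
  then have kA1: "card A1 = card A - 1" "card A1 < card A" using kpos by auto
  have insA: "insert x A1 = A" using xA A1_def by auto
  have xA1: "x \<notin> A1" using A1_def by auto
  have lt1: "\<forall>a\<in>A1. a \<noteq> -x \<longrightarrow> \<bar>a\<bar> < x"
  proof (intro ballI impI)
    fix a assume a: "a \<in> A1" "a \<noteq> -x"
    then have "a \<noteq> x" "\<bar>a\<bar> \<le> x" using le A1_def by auto
    then show "\<bar>a\<bar> < x" using a(2) by (auto simp: abs_if split: if_splits)
  qed
  have arith_gain: "2 * int n * (int (card A) - int n) + 4 - int n * (int n - 1) \<le> 2 * int (card (SS n A))"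
    if "card (SS n A) \<ge> card (SS n A1) + n" "CL n A1" "n + 1 \<le> card (abs ` A1)"
  proof -
    have h: "2 * int n * (int (card A1) - int n) + 4 - int n * (int n - 1) \<le> 2 * int (card (SS n A1))"
      using that(2,3) finA1 unfolding CL_def by blast
    have e: "int (card A1) = int (card A) - 1" using kA1 kpos by simp
    have "2 * int n * (int (card A) - int n) = 2 * int n * (int (card A1) - int n) + 2 * int n"
      unfolding e by (simp add: algebra_simps)
    then show ?thesis using h that(1) by linarith
  qed
  show ?thesis
  proof (cases "-x \<in> A")
    case True
    have "abs ` A1 = abs ` A"
    proof
      show "abs ` A1 \<subseteq> abs ` A" using A1_def by auto
      show "abs ` A \<subseteq> abs ` A1"
      proof
        fix v assume "v \<in> abs ` A"
        then obtain a where a: "a \<in> A" "v = \<bar>a\<bar>" by auto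
        show "v \<in> abs ` A1"
        proof (cases "a = x")
          case True
          have "-x \<in> A1" using \<open>-x \<in> A\<close> x0 A1_def by auto
          then show ?thesis using a True by (metis abs_minus_cancel imageI)
        next
          case False then show ?thesis using a A1_def by auto
        qed
      qed
    qed
    then have b1: "n + 1 \<le> card (abs ` A1)" using bA by simp
    have "card (SS n (insert x A1)) \<ge> card (SS n A1) + n"
      by (rule GAIN[OF finA1 x0 xA1 lt1]) (use b1 in auto)
    then show ?thesis using arith_gain IH[OF kA1(2)] b1 insA by simp
  next
    case False
    have ab1: "abs ` A1 = abs ` A - {x}"
    proof
      show "abs ` A1 \<subseteq> abs ` A - {x}"
      proof
        fix v assume "v \<in> abs ` A1"
        then obtain a where a: "a \<in> A1" "v = \<bar>a\<bar>" by auto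
        have "a \<noteq> -x" using a False A1_def by auto
        then show "v \<in> abs ` A - {x}" using lt1 a A1_def by auto
      qed
      show "abs ` A - {x} \<subseteq> abs ` A1" using A1_def x0 by auto
    qed
    have xB: "x \<in> abs ` A" using xA x0 by (metis abs_of_pos imageI)
    have cb1: "card (abs ` A1) = card (abs ` A) - 1" using ab1 xB finB by (simp add: card_Diff_singleton)
    have lt2: "\<forall>a\<in>A1. \<bar>a\<bar> < x"
    proof
      fix a assume aA1: "a \<in> A1"
      then have "a \<noteq> -x" using False A1_def by auto
      then show "\<bar>a\<bar> < x" using lt1 aA1 by blast
    qed
    show ?thesis
    proof (cases "n + 2 \<le> card (abs ` A)")
      case True
      then have b1: "n + 1 \<le> card (abs ` A1)" using cb1 by simp
      have "card (SS n (insert x A1)) \<ge> card (SS n A1) + n"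
        by (rule GAIN[OF finA1 x0 xA1 lt1]) (use b1 False A1_def in auto)
      then show ?thesis using arith_gain IH[OF kA1(2)] b1 insA by simp
    next
      case False
      then have b1: "card (abs ` A1) = n" using cb1 bA by simp
      show ?thesis
      proof (cases "n = 3")
        case True
        have "3 * int (card A1) - 7 \<le> int (card (SS 3 (insert x A1)))"
          using N3BASE[OF finA1 _ x0 lt2] b1 True by simp
        then show ?thesis using True insA kA1 kpos by simp
      next
        case False
        then have n4: "n \<ge> 4" using n3 by simp
        have CLn: "CL (n-1) A1" using IHn[OF n4] by blast
        have h: "2 * int (n-1) * (int (card A1) - int (n-1)) + 4 - int (n-1) * (int (n-1) - 1)
            \<le> 2 * int (card (SS (n-1) A1))"
          using CLn finA1 b1 n4 unfolding CL_def by simp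
        have n1: "n \<ge> 1" using n4 by simp
        have o1: "card (SS n A) \<ge> card (SS (n-1) A1) + 1" using OPTB(1)[OF finA1 x0 lt2 b1 n1] insA by simp
        have k2: "card A1 \<le> 2 * n" using card_le_2abs[OF finA1] b1 by simp
        have o2: "card A1 = 2 * n \<Longrightarrow> card (SS n A) \<ge> card (SS (n-1) A1) + 2"
          using OPTB(2)[OF finA1 x0 lt2 b1 n1] insA full_paired[OF finA1] b1 by simp
        have e: "int (card A) = int (card A1) + 1" using kA1 kpos by simp
        have en: "int (n - 1) = int n - 1" using n1 by simp
        have id: "2 * int n * (int (card A) - int n) + 4 - int n * (int n - 1) =
          (2 * (int n - 1) * (int (card A1) - (int n - 1)) + 4 - (int n - 1) * ((int n - 1) - 1))
          + 2 * (int (card A1) - 2 * int n + 2)"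
          unfolding e by (simp add: algebra_simps)
        define Q where "Q = 2 * (int n - 1) * (int (card A1) - (int n - 1)) + 4 - (int n - 1) * ((int n - 1) - 1)"
        have h': "Q \<le> 2 * int (card (SS (n-1) A1))" using h unfolding en Q_def .
        have id': "2 * int n * (int (card A) - int n) + 4 - int n * (int n - 1) =
           Q + 2 * (int (card A1) - 2 * int n + 2)" using id unfolding Q_def .
        show ?thesis
        proof (cases "card A1 = 2 * n")
          case True
          then have c1: "int (card A1) = 2 * int n" by simp
          have c2: "int (card (SS n A)) \<ge> int (card (SS (n-1) A1)) + 2" using o2[OF True] by linarith
          have "2 * int n * (int (card A) - int n) + 4 - int n * (int n - 1) = Q + 4"
            unfolding id' using c1 by simp
          then show ?thesis using h' c2 by linarith
        next
          case False
          then have c1: "int (card A1) \<le> 2 * int n - 1" using k2 by linarith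
          have c2: "int (card (SS n A)) \<ge> int (card (SS (n-1) A1)) + 1" using o1 by linarith
          have "2 * int n * (int (card A) - int n) + 4 - int n * (int n - 1) \<le> Q + 2"
            unfolding id' using c1 by arith
          then show ?thesis using h' c2 by linarith
        qed
      qed
    qed
  qed
qed

lemma CLAIM: "n \<ge> 3 \<Longrightarrow> CL n A"
proof (induction n arbitrary: A rule: less_induct)
  case (less n)
  have IHn: "n \<ge> 4 \<Longrightarrow> \<forall>A. CL (n-1) A" using less by simp
  have n3: "n \<ge> 3" using less by simp
  have "\<forall>A. card A = k \<longrightarrow> CL n A" for k
  proof (induction k rule: less_induct)
    case (less k)
    show ?case unfolding CL_def
    proof (intro allI impI)
      fix A :: "int set" assume kA: "card A = k" and fin: "finite A" and bA: "n + 1 \<le> card (abs ` A)"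
      have IH: "\<And>A'. card A' < card A \<Longrightarrow> CL n A'" using less kA by blast
      have finB: "finite (abs ` A)" using fin by auto
      have neB: "abs ` A \<noteq> {}" using bA by auto
      define M where "M = Max (abs ` A)"
      have "M \<in> abs ` A" using Max_in[OF finB neB] M_def by simp
      then obtain a where a: "a \<in> A" "M = \<bar>a\<bar>" by auto
      show "2 * int n * (int (card A) - int n) + 4 - int n * (int n - 1) \<le> 2 * int (card (SS n A))"
      proof (cases "M \<in> A")
        case True
        show ?thesis by (rule STEP[OF n3 fin bA True M_def IH IHn])
      next
        case False
        then have "a = -M" using a by (auto simp: abs_if split: if_splits)
        define A' where "A' = uminus ` A"
        have MA': "M \<in> A'" using a \<open>a = -M\<close> A'_def by (metis add.inverse_inverse imageI)
        have cA': "card A' = card A" unfolding A'_def by (simp add: card_image inj_on_def)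
        have bA': "abs ` A' = abs ` A" unfolding A'_def by (rule abs_neg_img)
        have finA': "finite A'" using fin A'_def by auto
        have "2 * int n * (int (card A') - int n) + 4 - int n * (int n - 1) \<le> 2 * int (card (SS n A'))"
          by (rule STEP[OF n3 finA' _ MA' _ _ IHn]) (use bA bA' M_def cA' IH in auto)
        then show ?thesis using cA' card_SS_neg[of n A] A'_def by simp
      qed
    qed
  qed
  then show ?case by blast
qed

theorem theorem1p5:
  fixes n k :: nat and A :: "int set"
  assumes "n > 2" and "finite A" and "card A = k" and "k \<ge> 2 * n + 1"
  shows "int (card (restricted_sumset n A)) >
           (int k - 1) * int n - 3 * int (n choose 2) + 1"
proof -
  have b: "n + 1 \<le> card (abs ` A)" using card_le_2abs[OF assms(2)] assms(3,4) by simp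
  have h: "2 * int n * (int (card A) - int n) + 4 - int n * (int n - 1) \<le> 2 * int (card (SS n A))"
    using CLAIM[of n A] assms(1,2) b unfolding CL_def by simp
  have ev: "even (n * (n - 1))" by (cases "even n") auto
  have c2: "2 * int (n choose 2) = int n * (int n - 1)"
  proof -
    have "2 * (n choose 2) = n * (n - 1)" using ev by (simp add: choose_two)
    then have "int (2 * (n choose 2)) = int (n * (n - 1))" by simp
    then show ?thesis using assms(1) by (simp add: of_nat_diff)
  qed
  define N where "N = int n * (int n - 1)"
  define P where "P = int n * int k"
  define Q where "Q = int n * int n"
  have e1: "2 * int n * (int (card A) - int n) + 4 - int n * (int n - 1) = 2 * P - 2 * Q + 4 - N"
    unfolding P_def Q_def N_def using assms(3) by (simp add: algebra_simps)
  have e2: "2 * ((int k - 1) * int n - 3 * int (n choose 2) + 1) = 2 * P - 2 * int n - 3 * N + 2"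
    unfolding P_def N_def using c2 by (simp add: algebra_simps)
  have e3: "N = Q - int n" unfolding N_def Q_def by (simp add: algebra_simps)
  have "2 * ((int k - 1) * int n - 3 * int (n choose 2) + 1) < 2 * int (card (SS n A))"
    using h unfolding e1 e2 using e3 by arith
  then show ?thesis using rs_eq[of n A] by simp
qed

end
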